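(* If a planar matching covered graph is cycle-extendable, then it is $K_{2,3}$-free.
   Context: A graph is matching covered if it is connected, has at least two vertices, and every edge lies in some perfect matching; it is cycle-extendable if moreover for every even cycle $C$ the graph $G-V(C)$ has a perfect matching. To bisubdivide an edge is to subdivide it by inserting an even number of new vertices; a bisubdivision of $K$ is obtained by bisubdividing some (possibly none) of its edges. A graph is $K_{2,3}$-free if it has no subgraph that is a bisubdivision of $K_{2,3}$. *)

theory Defs
  imports "HOL-Analysis.Analysis"
begin

definition graph :: "'a set \<Rightarrow> 'a set set \<Rightarrow> bool" where
  "graph V E \<longleftrightarrow> finite V \<and> (\<forall>e\<in>E. \<exists>u v. e = {u, v} \<and> u \<noteq> v \<and> u \<in> V \<and> v \<in> V)"

definition adj :: "'a set set \<Rightarrow> 'a \<Rightarrow> 'a \<Rightarrow> bool" where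
  "adj E u v \<longleftrightarrow> {u, v} \<in> E"

definition connected_graph :: "'a set \<Rightarrow> 'a set set \<Rightarrow> bool" where
  "connected_graph V E \<longleftrightarrow> (\<forall>u\<in>V. \<forall>v\<in>V. (adj E)\<^sup>*\<^sup>* u v)"

definition perfect_matching :: "'a set \<Rightarrow> 'a set set \<Rightarrow> 'a set set \<Rightarrow> bool" where
  "perfect_matching V E M \<longleftrightarrow> M \<subseteq> E \<and> (\<forall>v\<in>V. \<exists>!e. e \<in> M \<and> v \<in> e)"

definition has_perfect_matching :: "'a set \<Rightarrow> 'a set set \<Rightarrow> bool" where
  "has_perfect_matching V E \<longleftrightarrow> (\<exists>M. perfect_matching V E M)"

definition matching_covered :: "'a set \<Rightarrow> 'a set set \<Rightarrow> bool" where
  "matching_covered V E \<longleftrightarrow> graph V E \<and> connected_graph V E \<and> card V \<ge> 2 \<and>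
     (\<forall>e\<in>E. \<exists>M. perfect_matching V E M \<and> e \<in> M)"

definition is_cycle :: "'a set set \<Rightarrow> 'a list \<Rightarrow> bool" where
  "is_cycle E vs \<longleftrightarrow> length vs \<ge> 3 \<and> distinct vs \<and>
     (\<forall>i < length vs - 1. adj E (vs ! i) (vs ! Suc i)) \<and> adj E (last vs) (hd vs)"

definition del_verts_E :: "'a set set \<Rightarrow> 'a set \<Rightarrow> 'a set set" where
  "del_verts_E E S = {e \<in> E. e \<inter> S = {}}"

definition cycle_extendable :: "'a set \<Rightarrow> 'a set set \<Rightarrow> bool" where
  "cycle_extendable V E \<longleftrightarrow> matching_covered V E \<and>
     (\<forall>vs. is_cycle E vs \<and> even (length vs) \<longrightarrow>
        has_perfect_matching (V - set vs) (del_verts_E E (set vs)))"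

definition is_path :: "'a set set \<Rightarrow> 'a \<Rightarrow> 'a list \<Rightarrow> 'a \<Rightarrow> bool" where
  "is_path E a p b \<longleftrightarrow> p \<noteq> [] \<and> hd p = a \<and> last p = b \<and> distinct p \<and>
     (\<forall>i < length p - 1. adj E (p ! i) (p ! Suc i))"

definition inner_verts :: "'a list \<Rightarrow> 'a set" where
  "inner_verts p = set (butlast (tl p))"

text \<open>G contains a subgraph that is a bisubdivision of K_{2,3}: branch vertices
  a 0, a 1 (one side) and b 0, b 1, b 2 (other side), all distinct; for each pair
  (i,j) a path P i j from a i to b j of odd length (number of edges), so that the edge
  a_i b_j is subdivided by an even number of new vertices; the paths are internally
  disjoint from each other and from the branch vertices.\<close>
definition has_K23_bisubdivision :: "'a set set \<Rightarrow> bool" where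
  "has_K23_bisubdivision E \<longleftrightarrow>
     (\<exists>(a :: nat \<Rightarrow> 'a) (b :: nat \<Rightarrow> 'a) (P :: nat \<Rightarrow> nat \<Rightarrow> 'a list).
        inj_on a {0..<2} \<and> inj_on b {0..<3} \<and> a ` {0..<2} \<inter> b ` {0..<3} = {} \<and>
        (\<forall>i<2. \<forall>j<3. is_path E (a i) (P i j) (b j) \<and> odd (length (P i j) - 1) \<and>
                     inner_verts (P i j) \<inter> (a ` {0..<2} \<union> b ` {0..<3}) = {}) \<and>
        (\<forall>i<2. \<forall>j<3. \<forall>i'<2. \<forall>j'<3. (i, j) \<noteq> (i', j') \<longrightarrow>
                     inner_verts (P i j) \<inter> inner_verts (P i' j') = {}))"

definition K23_free :: "'a set set \<Rightarrow> bool" where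
  "K23_free E \<longleftrightarrow> \<not> has_K23_bisubdivision E"

definition planar :: "'a set \<Rightarrow> 'a set set \<Rightarrow> bool" where
  "planar V E \<longleftrightarrow> (\<exists>(pos :: 'a \<Rightarrow> real^2) (\<gamma> :: 'a set \<Rightarrow> real \<Rightarrow> real^2).
     inj_on pos V \<and>
     (\<forall>e\<in>E. arc (\<gamma> e) \<and> {pathstart (\<gamma> e), pathfinish (\<gamma> e)} = pos ` e \<and>
             path_image (\<gamma> e) \<inter> pos ` V = pos ` e) \<and>
     (\<forall>e\<in>E. \<forall>e'\<in>E. e \<noteq> e' \<longrightarrow> path_image (\<gamma> e) \<inter> path_image (\<gamma> e') \<subseteq> pos ` (e \<inter> e')))"

end

theory Submission
  imports Defs
begin
fun walk :: "'a set set \<Rightarrow> 'a list \<Rightarrow> bool" where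
  "walk E (u # v # rest) = (adj E u v \<and> walk E (v # rest))"
| "walk E _ = True"

fun pedges :: "'a list \<Rightarrow> 'a set set" where
  "pedges (u # v # rest) = insert {u, v} (pedges (v # rest))"
| "pedges _ = {}"

lemma adj_sym: "adj E u v \<Longrightarrow> adj E v u"
  unfolding adj_def by (simp add: insert_commute)

lemma walk_iff: "walk E p \<longleftrightarrow> (\<forall>i < length p - 1. adj E (p ! i) (p ! Suc i))"
proof (induction E p rule: walk.induct)
  case (1 E u v rest)
  then show ?case by (auto simp: less_Suc_eq_0_disj)
qed auto

lemma walk_append:
  "walk E (xs @ ys) \<longleftrightarrow> walk E xs \<and> walk E ys \<and> (xs \<noteq> [] \<and> ys \<noteq> [] \<longrightarrow> adj E (last xs) (hd ys))"
proof (induction xs rule: induct_list012)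
  case 1 then show ?case by simp
next
  case (2 x) then show ?case by (cases ys) auto
next
  case (3 x y zs) then show ?case by auto
qed

lemma walk_Cons: "walk E (x # xs) \<longleftrightarrow> walk E xs \<and> (xs \<noteq> [] \<longrightarrow> adj E x (hd xs))"
  by (cases xs) auto

lemma walk_rev: "walk E xs \<Longrightarrow> walk E (rev xs)"
proof (induction xs)
  case Nil then show ?case by simp
next
  case (Cons x xs)
  then show ?case by (auto simp: walk_append walk_Cons last_rev adj_sym)
qed

lemma walk_glue:
  assumes "walk E xs" "walk E ys" "xs \<noteq> []" "ys \<noteq> []" "last xs = hd ys"
  shows "walk E (xs @ tl ys)"
proof (cases ys)
  case Nil then show ?thesis using assms by simp
next
  case (Cons y ys')
  then show ?thesis using assms by (auto simp: walk_append walk_Cons)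
qed

lemma pedges_sub: "walk E p \<Longrightarrow> pedges p \<subseteq> E"
  by (induction E p rule: walk.induct) (auto simp: adj_def)

lemma pedges_verts: "e \<in> pedges p \<Longrightarrow> e \<subseteq> set p"
  by (induction p rule: pedges.induct) auto

lemma pedges_Union: "length p \<ge> 2 \<Longrightarrow> \<Union>(pedges p) = set p"
proof (induction p rule: pedges.induct)
  case (1 u v rest)
  then show ?case by (cases rest) auto
qed auto

lemma pedges_ends:
  assumes "distinct p" "e \<in> pedges p" "hd p \<in> e" "last p \<in> e" "length p \<ge> 2"
  shows "length p = 2"
  using assms
proof (induction p rule: pedges.induct)
  case (1 u v rest)
  show ?case
  proof (cases "e = {u, v}")
    case True
    then show ?thesis using 1 by (cases rest rule: rev_cases) auto
  next
    case False
    then have "e \<in> pedges (v # rest)" using 1 by auto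
    then have "e \<subseteq> set (v # rest)" by (rule pedges_verts)
    then show ?thesis using 1 by auto
  qed
qed auto

lemma set_inner:
  assumes "distinct L" "length L \<ge> 2"
  shows "set (butlast (tl L)) = set L - {hd L, last L}"
proof -
  obtain x ys where L: "L = x # ys" using assms by (cases L) auto
  then have "ys \<noteq> []" using assms by auto
  then obtain zs y where ys: "ys = zs @ [y]" by (cases ys rule: rev_cases) auto
  show ?thesis using assms unfolding L ys by auto
qed

lemma set_hd_last:
  assumes "length L \<ge> 2"
  shows "set L = {hd L, last L} \<union> set (butlast (tl L))"
proof -
  obtain x ys where L: "L = x # ys" using assms by (cases L) auto
  then have "ys \<noteq> []" using assms by auto
  then obtain zs y where ys: "ys = zs @ [y]" by (cases ys rule: rev_cases) auto
  show ?thesis using assms unfolding L ys by auto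
qed

locale cplane =
  fixes V :: "'a set" and E :: "'a set set" and pos :: "'a \<Rightarrow> complex"
    and \<gamma> :: "'a set \<Rightarrow> real \<Rightarrow> complex"
  assumes gr: "graph V E" and injp: "inj_on pos V"
    and arcs: "\<And>e. e \<in> E \<Longrightarrow> arc (\<gamma> e) \<and> {pathstart (\<gamma> e), pathfinish (\<gamma> e)} = pos ` e \<and>
                      path_image (\<gamma> e) \<inter> pos ` V = pos ` e"
    and cross: "\<And>e e'. e \<in> E \<Longrightarrow> e' \<in> E \<Longrightarrow> e \<noteq> e' \<Longrightarrow>
                   path_image (\<gamma> e) \<inter> path_image (\<gamma> e') \<subseteq> pos ` (e \<inter> e')"
begin

lemma edge_in_V: "e \<in> E \<Longrightarrow> e \<subseteq> V"
  using gr unfolding graph_def by fastforce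

lemma edge_form: "e \<in> E \<Longrightarrow> \<exists>u v. e = {u, v} \<and> u \<noteq> v \<and> u \<in> V \<and> v \<in> V"
  using gr unfolding graph_def by blast

lemma adjD: "adj E u v \<Longrightarrow> {u, v} \<in> E \<and> u \<noteq> v \<and> u \<in> V \<and> v \<in> V"
proof -
  assume a: "adj E u v"
  then have e: "{u, v} \<in> E" unfolding adj_def .
  then obtain x y where xy: "{u, v} = {x, y}" "x \<noteq> y" "x \<in> V" "y \<in> V" using edge_form by blast
  then have "(u = x \<and> v = y) \<or> (u = y \<and> v = x)" by (simp add: doubleton_eq_iff)
  then show ?thesis using e xy by blast
qed

definition oarc :: "'a \<Rightarrow> 'a \<Rightarrow> real \<Rightarrow> complex" where
  "oarc u v = (if pathstart (\<gamma> {u, v}) = pos u then \<gamma> {u, v} else reversepath (\<gamma> {u, v}))"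

lemma oarc:
  assumes "adj E u v"
  shows "arc (oarc u v) \<and> pathstart (oarc u v) = pos u \<and> pathfinish (oarc u v) = pos v \<and>
         path_image (oarc u v) = path_image (\<gamma> {u, v})"
proof -
  have e: "{u, v} \<in> E" "u \<noteq> v" "u \<in> V" "v \<in> V" using adjD[OF assms] by auto
  have pne: "pos u \<noteq> pos v" using inj_on_contraD[OF injp e(2,3,4)] .
  note A = arcs[OF e(1)]
  have ar: "arc (\<gamma> {u,v})" using A by blast
  have d: "pathstart (\<gamma> {u,v}) \<noteq> pathfinish (\<gamma> {u,v})" using arc_distinct_ends[OF ar] by simp
  have s: "{pathstart (\<gamma> {u,v}), pathfinish (\<gamma> {u,v})} = {pos u, pos v}" using A by simp
  have m: "pathfinish (\<gamma> {u, v}) \<in> {pos u, pos v}" "pathstart (\<gamma> {u, v}) \<in> {pos u, pos v}"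
      "pos u \<in> {pathstart (\<gamma> {u,v}), pathfinish (\<gamma> {u,v})}" using s by blast+
  show ?thesis
  proof (cases "pathstart (\<gamma> {u, v}) = pos u")
    case True
    then have "pathfinish (\<gamma> {u, v}) = pos v" using m d by auto
    then show ?thesis using True ar unfolding oarc_def by simp
  next
    case False
    then have "pathstart (\<gamma> {u, v}) = pos v" "pathfinish (\<gamma> {u, v}) = pos u" using m d by auto
    then show ?thesis using False ar unfolding oarc_def
      by (simp add: arc_reversepath path_image_reversepath)
  qed
qed

fun pcurve :: "'a list \<Rightarrow> real \<Rightarrow> complex" where
  "pcurve (u # v # rest) = (if rest = [] then oarc u v else oarc u v +++ pcurve (v # rest))"
| "pcurve _ = \<gamma> {}"

definition img :: "'a list \<Rightarrow> complex set" where
  "img p = (\<Union>e\<in>pedges p. path_image (\<gamma> e))"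

lemma img_Cons2: "img (u # v # rest) = path_image (\<gamma> {u, v}) \<union> img (v # rest)"
  unfolding img_def by simp

lemma pcurve_props:
  assumes "walk E p" "distinct p" "length p \<ge> 2"
  shows "arc (pcurve p) \<and> pathstart (pcurve p) = pos (hd p) \<and> pathfinish (pcurve p) = pos (last p) \<and>
         path_image (pcurve p) = img p"
  using assms
proof (induction p rule: pcurve.induct)
  case (1 u v rest)
  have a: "adj E u v" using 1 by simp
  note O = oarc[OF a]
  show ?case
  proof (cases "rest = []")
    case True
    then show ?thesis using O unfolding img_def by simp
  next
    case False
    have IH: "arc (pcurve (v # rest)) \<and> pathstart (pcurve (v # rest)) = pos v \<and>
         pathfinish (pcurve (v # rest)) = pos (last (v # rest)) \<and> path_image (pcurve (v # rest)) = img (v # rest)"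
    proof -
      have "length (v # rest) \<ge> 2" using False by (cases rest) auto
      moreover have "walk E (v # rest)" "distinct (v # rest)" using 1(2,3) by auto
      ultimately show ?thesis using 1(1)[OF False] by simp
    qed
    have disj: "path_image (oarc u v) \<inter> path_image (pcurve (v # rest)) \<subseteq> {pos v}"
    proof
      fix x assume x: "x \<in> path_image (oarc u v) \<inter> path_image (pcurve (v # rest))"
      then obtain e where e: "e \<in> pedges (v # rest)" "x \<in> path_image (\<gamma> e)"
        using IH unfolding img_def by auto
      have eE: "e \<in> E" using e pedges_sub 1 by (metis subsetD walk.simps(1))
      have ev: "e \<subseteq> set (v # rest)" using pedges_verts e by blast
      have "u \<notin> set (v # rest)" using 1 by simp
      then have ne: "{u, v} \<noteq> e" using ev by blast
      have "x \<in> pos ` ({u, v} \<inter> e)" using cross[OF conjunct1[OF adjD[OF a]] eE ne] x e O by blast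
      moreover have "{u, v} \<inter> e \<subseteq> {v}" using ev \<open>u \<notin> set (v # rest)\<close> by blast
      ultimately show "x \<in> {pos v}" by blast
    qed
    have "arc (oarc u v +++ pcurve (v # rest))"
      using O IH disj by (intro arc_join) auto
    moreover have "path_image (oarc u v +++ pcurve (v # rest)) = img (u # v # rest)"
      using O IH by (simp add: path_image_join img_Cons2)
    ultimately show ?thesis using O IH False by (simp add: pathstart_join pathfinish_join)
  qed
qed auto

lemma img_verts:
  assumes "walk E p" "length p \<ge> 2"
  shows "img p \<inter> pos ` V = pos ` set p"
proof -
  have "img p \<inter> pos ` V = (\<Union>e\<in>pedges p. path_image (\<gamma> e) \<inter> pos ` V)" unfolding img_def by blast
  also have "\<dots> = (\<Union>e\<in>pedges p. pos ` e)"
  proof (rule SUP_cong)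
    fix e assume "e \<in> pedges p"
    then have "e \<in> E" using pedges_sub[OF assms(1)] by auto
    then show "path_image (\<gamma> e) \<inter> pos ` V = pos ` e" using arcs by simp
  qed simp
  also have "\<dots> = pos ` \<Union>(pedges p)" by blast
  finally show ?thesis using pedges_Union[OF assms(2)] by simp
qed

lemma vert_in_img:
  assumes "walk E p" "length p \<ge> 2" "v \<in> V"
  shows "pos v \<in> img p \<longleftrightarrow> v \<in> set p"
proof -
  have sV: "set p \<subseteq> V" using pedges_Union[OF assms(2)] pedges_sub[OF assms(1)] edge_in_V by blast
  show ?thesis
  proof
    assume "pos v \<in> img p"
    then have "pos v \<in> pos ` set p" using img_verts[OF assms(1,2)] assms(3) by blast
    then show "v \<in> set p" using inj_on_image_mem_iff[OF injp assms(3) sV] by simp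
  qed (use img_verts[OF assms(1,2)] in blast)
qed

lemma img_Int:
  assumes "walk E p" "walk E q" "pedges p \<inter> pedges q = {}"
  shows "img p \<inter> img q \<subseteq> pos ` (set p \<inter> set q)"
proof
  fix x assume "x \<in> img p \<inter> img q"
  then obtain e e' where e: "e \<in> pedges p" "e' \<in> pedges q" "x \<in> path_image (\<gamma> e)" "x \<in> path_image (\<gamma> e')"
    unfolding img_def by auto
  have "e \<noteq> e'" using e assms(3) by blast
  then have "x \<in> pos ` (e \<inter> e')" using cross e pedges_sub assms by blast
  then show "x \<in> pos ` (set p \<inter> set q)" using pedges_verts e by blast
qed

end

lemma inside_conn:
  assumes "connected T" "T \<inter> K = {}" "x \<in> T" "y \<in> T" "x \<in> inside K"
  shows "y \<in> inside K"
proof -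
  have cc: "connected_component (- K) x y"
    unfolding connected_component_def using assms(1-4) by blast
  then have "connected_component_set (- K) x = connected_component_set (- K) y"
    by (simp add: connected_component_eq mem_Collect_eq)
  moreover have "y \<notin> K" using assms(2,4) by blast
  ultimately show ?thesis using assms(5) unfolding inside_def by simp
qed

context cplane begin

lemma even_inside:
  assumes M: "perfect_matching (V - S) (del_verts_E E S) M"
    and KS: "\<And>v. v \<in> V \<Longrightarrow> v \<in> S \<Longrightarrow> pos v \<in> K"
    and Kfree: "\<And>e. e \<in> E \<Longrightarrow> e \<inter> S = {} \<Longrightarrow> path_image (\<gamma> e) \<inter> K = {}"
  shows "even (card {v \<in> V. pos v \<in> inside K})"
proof -
  define I where "I = {v \<in> V. pos v \<in> inside K}"
  have finV: "finite V" using gr unfolding graph_def by simp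
  have finI: "finite I" unfolding I_def using finV by simp
  have IS: "I \<subseteq> V - S"
  proof
    fix v assume v: "v \<in> I"
    then have "v \<in> V" "pos v \<in> inside K" unfolding I_def by auto
    moreover have "pos v \<notin> K" using \<open>pos v \<in> inside K\<close> inside_no_overlap[of K] by blast
    ultimately show "v \<in> V - S" using KS by blast
  qed
  have ME: "e \<in> E \<and> e \<inter> S = {}" if "e \<in> M" for e
    using M that unfolding perfect_matching_def del_verts_E_def by blast
  have key: "e \<subseteq> I" if e: "e \<in> M" "v \<in> e" "v \<in> I" for e v
  proof
    fix w assume w: "w \<in> e"
    have eE: "e \<in> E" "e \<inter> S = {}" using ME[OF e(1)] by auto
    note A = arcs[OF eE(1)]
    have ar: "arc (\<gamma> e)" using A by blast
    have sub: "pos ` e \<subseteq> path_image (\<gamma> e)"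
    proof -
      have "pos ` e = {pathstart (\<gamma> e), pathfinish (\<gamma> e)}" using A by simp
      then show ?thesis using pathstart_in_path_image pathfinish_in_path_image by (metis insert_subset empty_subsetI)
    qed
    have conn: "connected (path_image (\<gamma> e))" using ar by (simp add: arc_imp_path connected_path_image)
    have "pos v \<in> inside K" using e(3) unfolding I_def by simp
    then have "pos w \<in> inside K"
      using inside_conn[OF conn Kfree[OF eE] _ _] sub e(2) w by blast
    moreover have "w \<in> V" using edge_in_V[OF eE(1)] w by blast
    ultimately show "w \<in> I" unfolding I_def by simp
  qed
  define C where "C = {e \<in> M. e \<subseteq> I}"
  have IC: "I = \<Union>C"
  proof
    show "I \<subseteq> \<Union>C"
    proof
      fix v assume v: "v \<in> I"
      then have "v \<in> V - S" using IS by blast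
      then obtain e where "e \<in> M" "v \<in> e" using M unfolding perfect_matching_def by blast
      then show "v \<in> \<Union>C" unfolding C_def using key v by blast
    qed
  qed (auto simp: C_def)
  have disj: "pairwise disjnt C"
    unfolding pairwise_def disjnt_def
  proof (intro ballI impI)
    fix e e' assume e: "e \<in> C" "e' \<in> C" "e \<noteq> e'"
    show "e \<inter> e' = {}"
    proof (rule ccontr)
      assume "e \<inter> e' \<noteq> {}"
      then obtain x where x: "x \<in> e" "x \<in> e'" by blast
      have "x \<in> V - S" using x e IS unfolding C_def by blast
      then have "\<exists>!f. f \<in> M \<and> x \<in> f" using M unfolding perfect_matching_def by blast
      then show False using e x unfolding C_def by blast
    qed
  qed
  have card2: "card e = 2" if "e \<in> C" for e
  proof -
    have "e \<in> E" using that ME unfolding C_def by blast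
    then obtain u v where "e = {u, v}" "u \<noteq> v" using edge_form by blast
    then show ?thesis by simp
  qed
  have finC: "finite C" unfolding C_def using finI
    by (metis (no_types, lifting) Collect_mono_iff PowI finite_Collect_subsets finite_subset)
  have "card I = sum card C" unfolding IC
    by (rule card_Union_disjoint[OF disj]) (metis card2 card.infinite zero_neq_numeral)
  also have "\<dots> = 2 * card C" using card2 by simp
  finally show ?thesis unfolding I_def by simp
qed

end

lemma outside_cc: "connected_component (- S) x y \<Longrightarrow> x \<in> outside S \<Longrightarrow> y \<in> outside S"
  unfolding outside_def
  using connected_component_eq[of y "- S" x] connected_component_in[of "- S" x y] connected_component_sym
  by (metis (no_types, lifting) IntI Int_iff mem_Collect_eq)

lemma JO2:
  fixes c1 c2 :: "real \<Rightarrow> complex"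
  assumes "arc c1" "arc c2" "pathstart c1 = a" "pathfinish c1 = b" "pathstart c2 = a" "pathfinish c2 = b"
    "path_image c1 \<inter> path_image c2 = {a,b}"
  shows "inside(path_image c1 \<union> path_image c2) \<noteq> {}"
    and "open(outside(path_image c1 \<union> path_image c2))"
    and "connected(inside(path_image c1 \<union> path_image c2))"
    and "connected(outside(path_image c1 \<union> path_image c2))"
    and "frontier(inside(path_image c1 \<union> path_image c2)) = path_image c1 \<union> path_image c2"
proof -
  have sp: "simple_path (c1 +++ reversepath c2)"
    using assms by (auto simp: simple_path_join_loop_eq arc_simple_path simple_path_reversepath)
  have pi: "path_image (c1 +++ reversepath c2) = path_image c1 \<union> path_image c2"
    using assms by (simp add: path_image_join path_image_reversepath)
  note J = Jordan_inside_outside[OF sp, unfolded pi]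
  show "inside(path_image c1 \<union> path_image c2) \<noteq> {}"
    and "open(outside(path_image c1 \<union> path_image c2))"
    and "connected(inside(path_image c1 \<union> path_image c2))"
    and "connected(outside(path_image c1 \<union> path_image c2))"
    and "frontier(inside(path_image c1 \<union> path_image c2)) = path_image c1 \<union> path_image c2"
    using J assms by simp_all
qed

lemma theta_middle:
  fixes c1 c2 c3 :: "real \<Rightarrow> complex"
  assumes arcs: "arc c1" "arc c2" "arc c3"
    and st: "pathstart c1 = a" "pathstart c2 = a" "pathstart c3 = a"
    and fi: "pathfinish c1 = b" "pathfinish c2 = b" "pathfinish c3 = b"
    and ab: "a \<noteq> b"
    and i12: "path_image c1 \<inter> path_image c2 = {a,b}"
    and i13: "path_image c1 \<inter> path_image c3 = {a,b}"
    and i23: "path_image c2 \<inter> path_image c3 = {a,b}"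
  shows "path_image c3 \<inter> inside(path_image c1 \<union> path_image c2) \<noteq> {} \<or>
         path_image c1 \<inter> inside(path_image c2 \<union> path_image c3) \<noteq> {} \<or>
         path_image c2 \<inter> inside(path_image c1 \<union> path_image c3) \<noteq> {}"
proof (rule ccontr)
  assume "\<not> ?thesis"
  then have n3: "path_image c3 \<inter> inside(path_image c1 \<union> path_image c2) = {}"
    and n1: "path_image c1 \<inter> inside(path_image c2 \<union> path_image c3) = {}"
    and n2: "path_image c2 \<inter> inside(path_image c1 \<union> path_image c3) = {}" by auto
  define K12 where "K12 = path_image c1 \<union> path_image c2"
  define K13 where "K13 = path_image c1 \<union> path_image c3"
  define K23 where "K23 = path_image c2 \<union> path_image c3"
  note J12 = JO2[OF arcs(1,2) st(1) fi(1) st(2) fi(2) i12, folded K12_def]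
  note J13 = JO2[OF arcs(1,3) st(1) fi(1) st(3) fi(3) i13, folded K13_def]
  note J23 = JO2[OF arcs(2,3) st(2) fi(2) st(3) fi(3) i23, folded K23_def]
  obtain u where u: "u \<in> inside K12" using J12(1) by blast
  have U23: "inside K12 \<inter> K23 = {}"
    using n3 inside_no_overlap[of K12] unfolding K12_def K23_def by blast
  have U13: "inside K12 \<inter> K13 = {}"
    using n3 inside_no_overlap[of K12] unfolding K12_def K13_def by blast
  have ccU: "connected_component (- K) x y" if "x \<in> inside K12" "y \<in> inside K12" "inside K12 \<inter> K = {}" for K x y
    unfolding connected_component_def using that J12(3) by blast
  have u23: "u \<in> outside K23"
  proof -
    obtain p where p: "p \<in> path_image c1" "p \<notin> {a,b}"
      using nonempty_simple_path_endless[OF arc_imp_simple_path[OF arcs(1)]] st fi by auto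
    have "p \<notin> K23" using p i12 i13 unfolding K23_def by blast
    moreover have "p \<notin> inside K23" using p n1 unfolding K23_def by blast
    ultimately have "p \<in> outside K23" using inside_Un_outside[of K23] by blast
    then obtain e where "e > 0" and e: "ball p e \<subseteq> outside K23"
      using J23(2) open_contains_ball_eq by blast
    have "p \<in> frontier (inside K12)" using J12(5) p unfolding K12_def by auto
    then obtain w where w: "w \<in> inside K12" "dist w p < e"
      using \<open>e > 0\<close> by (auto simp: frontier_def closure_approachable)
    then have "w \<in> outside K23" using e by (metis dist_commute mem_ball subsetD)
    then show ?thesis using outside_cc ccU[OF w(1) u U23] by blast
  qed
  have u13: "u \<in> outside K13"
  proof -
    obtain p where p: "p \<in> path_image c2" "p \<notin> {a,b}"
      using nonempty_simple_path_endless[OF arc_imp_simple_path[OF arcs(2)]] st fi by auto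
    have "p \<notin> K13" using p i12 i23 unfolding K13_def by blast
    moreover have "p \<notin> inside K13" using p n2 unfolding K13_def by blast
    ultimately have "p \<in> outside K13" using inside_Un_outside[of K13] by blast
    then obtain e where "e > 0" and e: "ball p e \<subseteq> outside K13"
      using J13(2) open_contains_ball_eq by blast
    have "p \<in> frontier (inside K12)" using J12(5) p unfolding K12_def by auto
    then obtain w where w: "w \<in> inside K12" "dist w p < e"
      using \<open>e > 0\<close> by (auto simp: frontier_def closure_approachable)
    then have "w \<in> outside K13" using e by (metis dist_commute mem_ball subsetD)
    then show ?thesis using outside_cc ccU[OF w(1) u U13] by blast
  qed
  define B where "B = K12 \<union> K13 \<union> K23 \<union> inside K13 \<union> inside K23 \<union> connected_component_set (- K12) u"
  have bK: "bounded K12" "bounded K13" "bounded K23"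
    unfolding K12_def K13_def K23_def
    by (simp_all add: bounded_Un bounded_simple_path_image arc_imp_simple_path arcs)
  have "bounded (connected_component_set (- K12) u)" using u unfolding inside_def by blast
  then have "bounded B" unfolding B_def using bK bounded_inside[OF bK(2)] bounded_inside[OF bK(3)] by (simp add: bounded_Un)
  then obtain z where z: "z \<notin> B" using not_bounded_UNIV by (metis UNIV_eq_I)
  have z23: "z \<in> outside K23" using z inside_Un_outside[of K23] unfolding B_def by blast
  have z13: "z \<in> outside K13" using z inside_Un_outside[of K13] unfolding B_def by blast
  have c23: "connected_component (- K23) u z"
    unfolding connected_component_def using J23(4) u23 z23 outside_no_overlap[of K23]
    by (metis Compl_iff disjoint_iff subsetI)
  have c13: "connected_component (- K13) u z"
    unfolding connected_component_def using J13(4) u13 z13 outside_no_overlap[of K13]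
    by (metis Compl_iff disjoint_iff subsetI)
  have "compact K23" unfolding K23_def by (simp add: compact_Un compact_path_image arcs arc_imp_path)
  moreover have "closed K13" unfolding K13_def by (simp add: closed_Un closed_path_image arcs arc_imp_path)
  moreover have "K23 \<inter> K13 = path_image c3"
  proof -
    have "a \<in> path_image c3" "b \<in> path_image c3"
      using st(3) fi(3) pathstart_in_path_image pathfinish_in_path_image by metis+
    then show ?thesis using i12 i13 i23 unfolding K23_def K13_def by blast
  qed
  moreover have "connected (path_image c3)" by (simp add: connected_path_image arcs arc_imp_path)
  ultimately have "connected_component (- (K23 \<union> K13)) u z"
    using Janiszewski[OF _ _ _ c23 c13] by simp
  then have "connected_component (- K12) u z"
    by (rule connected_component_of_subset) (auto simp: K12_def K13_def K23_def)
  then show False using z unfolding B_def by auto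
qed

lemma is_cycleI:
  assumes "length vs \<ge> 3" "distinct vs" "walk E (vs @ [hd vs])"
  shows "is_cycle E vs"
proof -
  have "vs \<noteq> []" using assms(1) by auto
  then have "walk E vs" "adj E (last vs) (hd vs)" using assms(3) by (auto simp: walk_append)
  then show ?thesis using assms(1,2) unfolding is_cycle_def walk_iff by simp
qed

lemma set_tl_distinct: "distinct L \<Longrightarrow> L \<noteq> [] \<Longrightarrow> set (tl L) = set L - {hd L}"
  by (cases L) auto

context cplane begin

lemma Kfree:
  assumes "walk E p" "e \<in> E" "e \<inter> set p = {}"
  shows "path_image (\<gamma> e) \<inter> img p = {}"
proof (rule ccontr)
  assume "path_image (\<gamma> e) \<inter> img p \<noteq> {}"
  then obtain x e' where x: "x \<in> path_image (\<gamma> e)" "e' \<in> pedges p" "x \<in> path_image (\<gamma> e')"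
    unfolding img_def by blast
  have e'E: "e' \<in> E" using pedges_sub[OF assms(1)] x(2) by auto
  have e'p: "e' \<subseteq> set p" using pedges_verts[OF x(2)] .
  obtain u v where "e = {u, v}" using edge_form[OF assms(2)] by blast
  then have "e \<noteq> e'" using e'p assms(3) by blast
  then have "x \<in> pos ` (e \<inter> e')" using cross[OF assms(2) e'E] x by blast
  moreover have "e \<inter> e' = {}" using e'p assms(3) by blast
  ultimately show False by simp
qed

end

locale k23 = cplane V E pos \<gamma> for V :: "'a set" and E pos \<gamma> +
  fixes a :: "nat \<Rightarrow> 'a" and b :: "nat \<Rightarrow> 'a" and P :: "nat \<Rightarrow> nat \<Rightarrow> 'a list"
  assumes ainj: "inj_on a {0..<2}" and binj: "inj_on b {0..<3}"
    and abd: "a ` {0..<2} \<inter> b ` {0..<3} = {}"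
    and paths: "\<And>i j. i < 2 \<Longrightarrow> j < 3 \<Longrightarrow> is_path E (a i) (P i j) (b j) \<and> odd (length (P i j) - 1) \<and>
                     inner_verts (P i j) \<inter> (a ` {0..<2} \<union> b ` {0..<3}) = {}"
    and pdisj: "\<And>i j i' j'. i < 2 \<Longrightarrow> j < 3 \<Longrightarrow> i' < 2 \<Longrightarrow> j' < 3 \<Longrightarrow> (i, j) \<noteq> (i', j') \<Longrightarrow>
                     inner_verts (P i j) \<inter> inner_verts (P i' j') = {}"
    and ce: "\<And>vs. is_cycle E vs \<Longrightarrow> even (length vs) \<Longrightarrow>
                   has_perfect_matching (V - set vs) (del_verts_E E (set vs))"
begin

lemma a01: "a 0 \<noteq> a 1"
proof -
  have "(0::nat) \<in> {0..<2}" "(1::nat) \<in> {0..<2}" by auto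
  then show ?thesis using inj_on_contraD[OF ainj, of 0 1] by simp
qed

lemma bne: "j < 3 \<Longrightarrow> k < 3 \<Longrightarrow> j \<noteq> k \<Longrightarrow> b j \<noteq> b k"
  using inj_on_contraD[OF binj, of j k] by simp

lemma anb: "i < 2 \<Longrightarrow> j < 3 \<Longrightarrow> a i \<noteq> b j"
proof -
  assume "i < 2" "j < 3"
  then have "a i \<in> a ` {0..<2}" "b j \<in> b ` {0..<3}" by auto
  then show ?thesis using abd by (metis IntI empty_iff)
qed

lemma inner_nb: "i < 2 \<Longrightarrow> j < 3 \<Longrightarrow> i' < 2 \<Longrightarrow> j' < 3 \<Longrightarrow>
    a i' \<notin> inner_verts (P i j) \<and> b j' \<notin> inner_verts (P i j)"
  using paths[of i j] by auto

lemma P_props: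
  assumes "i < 2" "j < 3"
  shows "walk E (P i j) \<and> distinct (P i j) \<and> hd (P i j) = a i \<and> last (P i j) = b j \<and>
         length (P i j) \<ge> 2 \<and> even (length (P i j)) \<and>
         set (P i j) = {a i, b j} \<union> inner_verts (P i j)"
proof -
  have p: "is_path E (a i) (P i j) (b j)" "odd (length (P i j) - 1)" using paths[OF assms] by auto
  have "length (P i j) - 1 \<noteq> 0" using p(2) by (metis even_zero)
  then have l: "length (P i j) \<ge> 2" by arith
  have "even (length (P i j))" using p(2) l by (cases "length (P i j)") auto
  moreover have "set (P i j) = {a i, b j} \<union> inner_verts (P i j)"
    using set_hd_last[OF l] p(1) unfolding is_path_def inner_verts_def by simp
  ultimately show ?thesis using p l unfolding is_path_def walk_iff by simp
qed

definition Q :: "nat \<Rightarrow> 'a list" where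
  "Q j = P 0 j @ tl (rev (P 1 j))"

lemma Q_props:
  assumes "j < 3"
  shows "walk E (Q j) \<and> distinct (Q j) \<and> hd (Q j) = a 0 \<and> last (Q j) = a 1 \<and>
         length (Q j) \<ge> 3 \<and> odd (length (Q j)) \<and>
         set (Q j) = {a 0, a 1, b j} \<union> inner_verts (P 0 j) \<union> inner_verts (P 1 j)"
proof -
  note P0 = P_props[of 0 j] and P1 = P_props[of 1 j]
  have P0': "walk E (P 0 j)" "distinct (P 0 j)" "hd (P 0 j) = a 0" "last (P 0 j) = b j"
     "length (P 0 j) \<ge> 2" "even (length (P 0 j))" "set (P 0 j) = {a 0, b j} \<union> inner_verts (P 0 j)"
    using P0 assms by auto
  have P1': "walk E (P 1 j)" "distinct (P 1 j)" "hd (P 1 j) = a 1" "last (P 1 j) = b j"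
     "length (P 1 j) \<ge> 2" "even (length (P 1 j))" "set (P 1 j) = {a 1, b j} \<union> inner_verts (P 1 j)"
    using P1 assms by auto
  have "length (tl (rev (P 1 j))) \<ge> 1" using P1'(5) by simp
  then have ne0: "P 0 j \<noteq> []" "rev (P 1 j) \<noteq> []" "tl (rev (P 1 j)) \<noteq> []" using P0'(5) P1'(5)
    by (auto simp del: length_tl length_rev)
  have w: "walk E (Q j)" unfolding Q_def
    using walk_glue[OF P0'(1) walk_rev[OF P1'(1)] ne0(1,2)] P0'(4) P1'(4) by (simp add: hd_rev)
  have st: "set (tl (rev (P 1 j))) = {a 1} \<union> inner_verts (P 1 j)"
  proof -
    have "set (tl (rev (P 1 j))) = set (P 1 j) - {b j}"
      using set_tl_distinct[of "rev (P 1 j)"] P1'(2,4) ne0(2) by (simp add: hd_rev)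
    also have "\<dots> = {a 1} \<union> inner_verts (P 1 j)"
      using P1'(7) inner_nb[of 1 j 0 j] assms anb[of 1 j] by auto
    finally show ?thesis .
  qed
  have sQ: "set (Q j) = {a 0, a 1, b j} \<union> inner_verts (P 0 j) \<union> inner_verts (P 1 j)"
    unfolding Q_def using P0'(7) st by auto
  have dj: "set (P 0 j) \<inter> set (tl (rev (P 1 j))) = {}"
  proof -
    have "inner_verts (P 0 j) \<inter> inner_verts (P 1 j) = {}" using pdisj[of 0 j 1 j] assms by simp
    moreover have "a 0 \<noteq> a 1" by (rule a01)
    moreover have "b j \<noteq> a 1" using anb[of 1 j] assms by simp
    moreover have "a 0 \<notin> inner_verts (P 1 j)" "b j \<notin> inner_verts (P 1 j)" "a 1 \<notin> inner_verts (P 0 j)"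
      using inner_nb[of 1 j 0 j] inner_nb[of 0 j 1 j] assms by auto
    ultimately show ?thesis unfolding st P0'(7) by auto
  qed
  have d: "distinct (Q j)" unfolding Q_def using P0'(2) P1'(2) dj by (simp add: distinct_tl)
  have h: "hd (Q j) = a 0" unfolding Q_def using P0'(3) ne0(1) by simp
  have la: "last (Q j) = a 1" unfolding Q_def using ne0(3) P1'(3) ne0(2)
    by (simp add: last_tl last_rev)
  have len: "length (Q j) = length (P 0 j) + length (P 1 j) - 1" unfolding Q_def using ne0 P1'(5) by simp
  obtain k0 where k0: "length (P 0 j) = 2 * k0" using P0'(6) by (rule evenE)
  obtain k1 where k1: "length (P 1 j) = 2 * k1" using P1'(6) by (rule evenE)
  have "k0 \<ge> 1" using P0'(5) k0 by simp
  then have od: "odd (length (Q j))" unfolding len k0 k1 by presburger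
  have "card {a 0, a 1, b j} = 3" using a01 anb[of 0 j] anb[of 1 j] assms by simp
  moreover have "{a 0, a 1, b j} \<subseteq> set (Q j)" unfolding sQ by auto
  ultimately have "card (set (Q j)) \<ge> 3" using card_mono[OF finite_set] by metis
  then have "length (Q j) \<ge> 3" using distinct_card[OF d] by simp
  then show ?thesis using w d h la od sQ by simp
qed


lemma Q_int:
  assumes "j < 3" "k < 3" "j \<noteq> k"
  shows "set (Q j) \<inter> set (Q k) = {a 0, a 1}"
proof -
  have sj: "set (Q j) = {a 0, a 1, b j} \<union> inner_verts (P 0 j) \<union> inner_verts (P 1 j)"
    using Q_props[OF assms(1)] by simp
  have sk: "set (Q k) = {a 0, a 1, b k} \<union> inner_verts (P 0 k) \<union> inner_verts (P 1 k)"
    using Q_props[OF assms(2)] by simp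
  have f: "b j \<noteq> b k" using bne assms by simp
  have g: "b j \<notin> inner_verts (P 0 k)" "b j \<notin> inner_verts (P 1 k)"
          "b k \<notin> inner_verts (P 0 j)" "b k \<notin> inner_verts (P 1 j)"
          "a 0 \<notin> inner_verts (P 0 k)" "a 0 \<notin> inner_verts (P 1 k)"
          "a 1 \<notin> inner_verts (P 0 k)" "a 1 \<notin> inner_verts (P 1 k)"
          "a 0 \<notin> inner_verts (P 0 j)" "a 0 \<notin> inner_verts (P 1 j)"
          "a 1 \<notin> inner_verts (P 0 j)" "a 1 \<notin> inner_verts (P 1 j)"
    using inner_nb[of 0 k 0 j] inner_nb[of 1 k 0 j] inner_nb[of 0 j 0 k] inner_nb[of 1 j 0 k]
          inner_nb[of 0 k 1 j] inner_nb[of 1 k 1 j] inner_nb[of 0 j 1 k] inner_nb[of 1 j 1 k] assms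
    by auto
  have h: "inner_verts (P 0 j) \<inter> inner_verts (P 0 k) = {}" "inner_verts (P 0 j) \<inter> inner_verts (P 1 k) = {}"
          "inner_verts (P 1 j) \<inter> inner_verts (P 0 k) = {}" "inner_verts (P 1 j) \<inter> inner_verts (P 1 k) = {}"
    using pdisj[of 0 j 0 k] pdisj[of 0 j 1 k] pdisj[of 1 j 0 k] pdisj[of 1 j 1 k] assms by auto
  have bj: "b j \<noteq> a 0" "b j \<noteq> a 1" "b k \<noteq> a 0" "b k \<noteq> a 1" using anb[of 0 j] anb[of 1 j] anb[of 0 k] anb[of 1 k] assms by auto
  show ?thesis unfolding sj sk using f g h bj by auto
qed

lemma Q_edges:
  assumes "j < 3" "k < 3" "j \<noteq> k"
  shows "pedges (Q j) \<inter> pedges (Q k) = {}"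
proof (rule ccontr)
  assume "pedges (Q j) \<inter> pedges (Q k) \<noteq> {}"
  then obtain e where e: "e \<in> pedges (Q j)" "e \<in> pedges (Q k)" by blast
  have "e \<subseteq> {a 0, a 1}" using pedges_verts[OF e(1)] pedges_verts[OF e(2)] Q_int[OF assms] by blast
  moreover have "e \<in> E" using e(1) pedges_sub Q_props[OF assms(1)] by blast
  then obtain u v where uv: "e = {u, v}" "u \<noteq> v" using edge_form by blast
  ultimately have "a 0 \<in> e" "a 1 \<in> e" by auto
  then have "length (Q j) = 2" using pedges_ends[OF _ e(1)] Q_props[OF assms(1)] by simp
  then show False using Q_props[OF assms(1)] by simp
qed

lemma Q_curve:
  assumes "j < 3"
  shows "arc (pcurve (Q j)) \<and> pathstart (pcurve (Q j)) = pos (a 0) \<and> pathfinish (pcurve (Q j)) = pos (a 1) \<and>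
         path_image (pcurve (Q j)) = img (Q j)"
  using pcurve_props[of "Q j"] Q_props[OF assms] by simp

lemma img_int:
  assumes "j < 3" "k < 3" "j \<noteq> k"
  shows "img (Q j) \<inter> img (Q k) = {pos (a 0), pos (a 1)}"
proof
  have "img (Q j) \<inter> img (Q k) \<subseteq> pos ` (set (Q j) \<inter> set (Q k))"
    using Q_props[OF assms(1)] Q_props[OF assms(2)] Q_edges[OF assms] by (intro img_Int) auto
  then show "img (Q j) \<inter> img (Q k) \<subseteq> {pos (a 0), pos (a 1)}"
    unfolding Q_int[OF assms] by simp
  show "{pos (a 0), pos (a 1)} \<subseteq> img (Q j) \<inter> img (Q k)"
    using Q_curve[OF assms(1)] Q_curve[OF assms(2)]
    by (metis Int_iff empty_subsetI insert_subset pathfinish_in_path_image pathstart_in_path_image)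
qed

lemma pos_img_iff:
  assumes "j < 3" "v \<in> V"
  shows "pos v \<in> img (Q j) \<longleftrightarrow> v \<in> set (Q j)"
  using vert_in_img[of "Q j" v] Q_props[OF assms(1)] assms(2) by simp

lemma setQ_V: "j < 3 \<Longrightarrow> set (Q j) \<subseteq> V"
proof -
  assume j: "j < 3"
  have "length (Q j) \<ge> 2" using Q_props[OF j] by simp
  then have "set (Q j) = \<Union>(pedges (Q j))" by (rule pedges_Union[symmetric])
  then show "set (Q j) \<subseteq> V" using pedges_sub Q_props[OF j] edge_in_V by blast
qed

lemma cyc_even:
  assumes "j < 3" "k < 3" "j \<noteq> k"
  shows "even (card {v \<in> V. pos v \<in> inside (img (Q j) \<union> img (Q k))})"
proof -
  note Qj = Q_props[OF assms(1)] and Qk = Q_props[OF assms(2)]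
  define R where "R = tl (rev (Q k))"
  define vs where "vs = Q j @ butlast R"
  have lk: "length (Q k) \<ge> 3" using Qk by simp
  have "length R \<ge> 2" unfolding R_def using lk by simp
  then have Rne: "R \<noteq> []" by auto
  have rne: "rev (Q k) \<noteq> []" using lk by auto
  have hr: "hd (rev (Q k)) = a 1" using Qk by (simp add: hd_rev)
  have revQ: "rev (Q k) = a 1 # R" unfolding R_def using hd_Cons_tl[OF rne] hr by simp
  have lastR: "last R = a 0"
  proof -
    have "last (rev (Q k)) = a 0" using Qk by (simp add: last_rev)
    then show ?thesis using revQ Rne by (metis last_ConsR)
  qed
  have wR: "walk E (rev (Q k))" using walk_rev Qk by blast
  have dR: "distinct (rev (Q k))" using Qk by simp
  have hdvs: "hd vs = a 0" unfolding vs_def using Qj lk by (cases "Q j") auto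
  have bR: "butlast R @ [a 0] = R" using append_butlast_last_id[OF Rne] lastR by simp
  have "vs @ [hd vs] = vs @ [a 0]" using hdvs by simp
  also have "\<dots> = Q j @ R" unfolding vs_def using bR by simp
  finally have vs1: "vs @ [hd vs] = Q j @ R" .
  have qjne: "Q j \<noteq> []" using Qj by auto
  have "walk E (Q j @ tl (rev (Q k)))"
    using walk_glue[OF conjunct1[OF Qj] wR qjne rne] Qj hr by simp
  then have wvs: "walk E (vs @ [hd vs])" unfolding vs1 R_def .
  have sbR: "set (butlast R) = set (Q k) - {a 1, a 0}"
  proof -
    have "length (rev (Q k)) \<ge> 2" using lk by simp
    then have "set (butlast (tl (rev (Q k)))) = set (rev (Q k)) - {hd (rev (Q k)), last (rev (Q k))}"
      using set_inner[OF dR] by blast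
    then show ?thesis unfolding R_def using Qk by (simp add: hd_rev last_rev)
  qed
  have dvs: "distinct vs" unfolding vs_def using Qj dR Q_int[OF assms] sbR
    by (auto simp: R_def distinct_butlast distinct_tl)
  have svs: "set vs = set (Q j) \<union> set (Q k)" unfolding vs_def using sbR Qj Qk
    by (auto simp: Q_int[OF assms])
  have lR: "length R = length (Q k) - 1" unfolding R_def by simp
  have lvs: "length vs = length (Q j) + (length (Q k) - 2)" unfolding vs_def using lR lk by simp
  have oj: "odd (length (Q j))" and ok: "odd (length (Q k))" using Qj Qk by simp_all
  obtain m where m: "length (Q j) = 2 * m + 1" using oj by (rule oddE)
  obtain n where n: "length (Q k) = 2 * n + 1" using ok by (rule oddE)
  have "length (Q j) + (length (Q k) - 2) = 2 * (m + n)" unfolding m n using lk n by simp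
  then have ev: "even (length vs)" unfolding lvs by simp
  have lj: "length (Q j) \<ge> 3" using Qj by simp
  have cyc: "is_cycle E vs" using is_cycleI[OF _ dvs wvs] lvs lk lj by simp
  obtain M where M: "perfect_matching (V - set vs) (del_verts_E E (set vs)) M"
    using ce[OF cyc ev] unfolding has_perfect_matching_def by blast
  show ?thesis
  proof (rule even_inside[OF M])
    fix v assume "v \<in> V" "v \<in> set vs"
    then show "pos v \<in> img (Q j) \<union> img (Q k)" using pos_img_iff assms svs by auto
  next
    fix e assume e: "e \<in> E" "e \<inter> set vs = {}"
    have "e \<inter> set (Q j) = {}" "e \<inter> set (Q k) = {}" using e(2) unfolding svs by auto
    moreover have "walk E (Q j)" "walk E (Q k)" using Qj Qk by simp_all
    ultimately have "path_image (\<gamma> e) \<inter> img (Q j) = {}" "path_image (\<gamma> e) \<inter> img (Q k) = {}"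
      using Kfree[OF _ e(1)] by simp_all
    then show "path_image (\<gamma> e) \<inter> (img (Q j) \<union> img (Q k)) = {}" by blast
  qed
qed


lemma pa01: "pos (a 0) \<noteq> pos (a 1)"
proof -
  have "a 0 \<in> V" "a 1 \<in> V" using setQ_V[of 0] Q_props[of 0] by auto
  then show ?thesis using inj_on_contraD[OF injp a01] by simp
qed

lemma no_middle:
  assumes jkl: "j < 3" "k < 3" "l < 3" "j \<noteq> k" "j \<noteq> l" "k \<noteq> l"
    and ne: "img (Q l) \<inter> inside (img (Q j) \<union> img (Q k)) \<noteq> {}"
  shows False
proof -
  note Cj = Q_curve[OF jkl(1)] and Ck = Q_curve[OF jkl(2)] and Cl = Q_curve[OF jkl(3)]
  have sj: "simple_path (pcurve (Q j))" using Cj arc_imp_simple_path by blast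
  have sk: "simple_path (pcurve (Q k))" using Ck arc_imp_simple_path by blast
  have sl: "simple_path (pcurve (Q l))" using Cl arc_imp_simple_path by blast
  have ijk: "path_image (pcurve (Q j)) \<inter> path_image (pcurve (Q k)) = {pos (a 0), pos (a 1)}"
    using Cj Ck img_int jkl by simp
  have ijl: "path_image (pcurve (Q j)) \<inter> path_image (pcurve (Q l)) = {pos (a 0), pos (a 1)}"
    using Cj Cl img_int jkl by simp
  have ikl: "path_image (pcurve (Q k)) \<inter> path_image (pcurve (Q l)) = {pos (a 0), pos (a 1)}"
    using Ck Cl img_int jkl by simp
  have ne': "path_image (pcurve (Q l)) \<inter> inside (path_image (pcurve (Q j)) \<union> path_image (pcurve (Q k))) \<noteq> {}"
    using ne Cj Ck Cl by simp
  obtain d: "inside (img (Q j) \<union> img (Q l)) \<inter> inside (img (Q k) \<union> img (Q l)) = {}"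
    and u: "inside (img (Q j) \<union> img (Q l)) \<union> inside (img (Q k) \<union> img (Q l)) \<union>
            (img (Q l) - {pos (a 0), pos (a 1)}) = inside (img (Q j) \<union> img (Q k))"
  proof -
    have "pathstart (pcurve (Q j)) = pos (a 0)" "pathfinish (pcurve (Q j)) = pos (a 1)"
         "pathstart (pcurve (Q k)) = pos (a 0)" "pathfinish (pcurve (Q k)) = pos (a 1)"
         "pathstart (pcurve (Q l)) = pos (a 0)" "pathfinish (pcurve (Q l)) = pos (a 1)"
      using Cj Ck Cl by simp_all
    from split_inside_simple_closed_curve[OF sj this(1,2) sk this(3,4) sl this(5,6) pa01 ijk ijl ikl ne']
    show ?thesis using that Cj Ck Cl by (simp; blast)
  qed
  define Ijk where "Ijk = {v \<in> V. pos v \<in> inside (img (Q j) \<union> img (Q k))}"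
  define Ijl where "Ijl = {v \<in> V. pos v \<in> inside (img (Q j) \<union> img (Q l))}"
  define Ikl where "Ikl = {v \<in> V. pos v \<in> inside (img (Q k) \<union> img (Q l))}"
  define T where "T = set (Q l) - {a 0, a 1}"
  have QlV: "set (Q l) \<subseteq> V" using setQ_V jkl by simp
  have Ql: "distinct (Q l)" "length (Q l) \<ge> 3" "odd (length (Q l))" "a 0 \<in> set (Q l)" "a 1 \<in> set (Q l)"
    using Q_props[OF jkl(3)] by auto
  have a01V: "a 0 \<in> V" "a 1 \<in> V" using QlV Ql by auto
  have TT: "{v \<in> V. pos v \<in> img (Q l) - {pos (a 0), pos (a 1)}} = T"
  proof (rule set_eqI)
    fix v
    show "v \<in> {v \<in> V. pos v \<in> img (Q l) - {pos (a 0), pos (a 1)}} \<longleftrightarrow> v \<in> T"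
    proof (cases "v \<in> V")
      case True
      have "pos v = pos (a 0) \<longleftrightarrow> v = a 0" using injp True a01V by (meson inj_onD)
      moreover have "pos v = pos (a 1) \<longleftrightarrow> v = a 1" using injp True a01V by (meson inj_onD)
      ultimately show ?thesis using pos_img_iff[OF jkl(3) True] True unfolding T_def by auto
    next
      case False
      then show ?thesis using QlV unfolding T_def by auto
    qed
  qed
  have split: "Ijk = Ijl \<union> Ikl \<union> T"
    unfolding Ijk_def Ijl_def Ikl_def TT[symmetric] u[symmetric] by auto
  have finV: "finite V" using gr unfolding graph_def by simp
  have fins: "finite Ijl" "finite Ikl" "finite T"
    unfolding Ijl_def Ikl_def T_def using finV by auto
  have d1: "Ijl \<inter> Ikl = {}" unfolding Ijl_def Ikl_def using d by auto
  have d2: "(Ijl \<union> Ikl) \<inter> T = {}"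
  proof -
    have "pos v \<in> img (Q l)" if "v \<in> T" for v using that pos_img_iff[OF jkl(3)] QlV unfolding T_def by auto
    moreover have "inside (img (Q j) \<union> img (Q l)) \<inter> img (Q l) = {}"
      using inside_no_overlap[of "img (Q j) \<union> img (Q l)"] by blast
    moreover have "inside (img (Q k) \<union> img (Q l)) \<inter> img (Q l) = {}"
      using inside_no_overlap[of "img (Q k) \<union> img (Q l)"] by blast
    ultimately show ?thesis unfolding Ijl_def Ikl_def by blast
  qed
  have cIjk: "card Ijk = card Ijl + card Ikl + card T"
    unfolding split using fins d1 d2 by (simp add: card_Un_disjoint)
  have cT: "card T = length (Q l) - 2"
  proof -
    have "card (set (Q l)) = length (Q l)" using distinct_card[OF Ql(1)] .
    moreover have "card {a 0, a 1} = 2" using a01 by simp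
    moreover have "{a 0, a 1} \<subseteq> set (Q l)" using Ql by auto
    ultimately show ?thesis unfolding T_def by (simp add: card_Diff_subset)
  qed
  have oT: "odd (card T)"
  proof -
    obtain m where m: "length (Q l) = 2 * m + 1" using Ql(3) by (rule oddE)
    then have "card T = 2 * (m - 1) + 1" using cT Ql(2) by simp
    then show ?thesis by simp
  qed
  have e1: "even (card Ijk)" unfolding Ijk_def using cyc_even jkl by simp
  have e2: "even (card Ijl)" unfolding Ijl_def using cyc_even jkl by simp
  have e3: "even (card Ikl)" unfolding Ikl_def using cyc_even jkl by simp
  show False using e1 e2 e3 oT cIjk by simp
qed

lemma k23_False: False
proof -
  note C0 = Q_curve[of 0] and C1 = Q_curve[of 1] and C2 = Q_curve[of 2]
  have i01: "path_image (pcurve (Q 0)) \<inter> path_image (pcurve (Q 1)) = {pos (a 0), pos (a 1)}"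
    using C0 C1 img_int[of 0 1] by simp
  have i02: "path_image (pcurve (Q 0)) \<inter> path_image (pcurve (Q 2)) = {pos (a 0), pos (a 1)}"
    using C0 C2 img_int[of 0 2] by simp
  have i12: "path_image (pcurve (Q 1)) \<inter> path_image (pcurve (Q 2)) = {pos (a 0), pos (a 1)}"
    using C1 C2 img_int[of 1 2] by simp
  have "arc (pcurve (Q 0))" "arc (pcurve (Q 1))" "arc (pcurve (Q 2))"
    "pathstart (pcurve (Q 0)) = pos (a 0)" "pathstart (pcurve (Q 1)) = pos (a 0)" "pathstart (pcurve (Q 2)) = pos (a 0)"
    "pathfinish (pcurve (Q 0)) = pos (a 1)" "pathfinish (pcurve (Q 1)) = pos (a 1)" "pathfinish (pcurve (Q 2)) = pos (a 1)"
    using C0 C1 C2 by simp_all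
  from theta_middle[OF this pa01 i01 i02 i12]
  have "img (Q 2) \<inter> inside (img (Q 0) \<union> img (Q 1)) \<noteq> {} \<or>
        img (Q 0) \<inter> inside (img (Q 1) \<union> img (Q 2)) \<noteq> {} \<or>
        img (Q 1) \<inter> inside (img (Q 0) \<union> img (Q 2)) \<noteq> {}"
    using C0 C1 C2 by simp
  then show False
    using no_middle[of 0 1 2] no_middle[of 1 2 0] no_middle[of 0 2 1] by auto
qed

end

definition c2 :: "real^2 \<Rightarrow> complex" where "c2 x = Complex (x$1) (x$2)"

lemma c2_linear: "linear c2"
  by (rule linearI) (simp_all add: c2_def complex_eq_iff scaleR_complex.sel)

lemma c2_inj: "inj c2"
proof (rule injI)
  fix x y :: "real^2" assume "c2 x = c2 y"
  then have "x$1 = y$1" "x$2 = y$2" unfolding c2_def by simp_all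
  then show "x = y" by (simp add: vec_eq_iff forall_2)
qed

lemma planar_complex:
  assumes "graph V E" "planar V E"
  shows "\<exists>pos \<gamma>. cplane V E pos \<gamma>"
proof -
  obtain pos :: "'a \<Rightarrow> real^2" and \<gamma> :: "'a set \<Rightarrow> real \<Rightarrow> real^2" where
    inj: "inj_on pos V" and
    A: "\<forall>e\<in>E. arc (\<gamma> e) \<and> {pathstart (\<gamma> e), pathfinish (\<gamma> e)} = pos ` e \<and>
             path_image (\<gamma> e) \<inter> pos ` V = pos ` e" and
    C: "\<forall>e\<in>E. \<forall>e'\<in>E. e \<noteq> e' \<longrightarrow> path_image (\<gamma> e) \<inter> path_image (\<gamma> e') \<subseteq> pos ` (e \<inter> e')"
    using assms(2) unfolding planar_def by blast
  have fI: "c2 ` X \<inter> c2 ` Y = c2 ` (X \<inter> Y)" for X Y using c2_inj by (simp add: image_Int)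
  have "cplane V E (c2 \<circ> pos) (\<lambda>e. c2 \<circ> \<gamma> e)"
  proof
    show "graph V E" by fact
    show "inj_on (c2 \<circ> pos) V"
      using inj c2_inj by (simp add: comp_inj_on inj_on_subset)
  next
    fix e assume e: "e \<in> E"
    have "arc (c2 \<circ> \<gamma> e)" using A e arc_linear_image_eq[OF c2_linear c2_inj] by simp
    moreover have "{pathstart (c2 \<circ> \<gamma> e), pathfinish (c2 \<circ> \<gamma> e)} = (c2 \<circ> pos) ` e"
    proof -
      have "{pathstart (c2 \<circ> \<gamma> e), pathfinish (c2 \<circ> \<gamma> e)} = c2 ` {pathstart (\<gamma> e), pathfinish (\<gamma> e)}"
        by (simp add: pathstart_compose pathfinish_compose)
      also have "\<dots> = (c2 \<circ> pos) ` e" using A e by (simp add: image_comp)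
      finally show ?thesis .
    qed
    moreover have "path_image (c2 \<circ> \<gamma> e) \<inter> (c2 \<circ> pos) ` V = (c2 \<circ> pos) ` e"
    proof -
      have "(c2 \<circ> pos) ` V = c2 ` (pos ` V)" by (simp add: image_comp)
      then have "path_image (c2 \<circ> \<gamma> e) \<inter> (c2 \<circ> pos) ` V = c2 ` (path_image (\<gamma> e) \<inter> pos ` V)"
        by (simp only: path_image_compose fI)
      also have "\<dots> = (c2 \<circ> pos) ` e" using A e by (simp add: image_comp)
      finally show ?thesis .
    qed
    ultimately show "arc (c2 \<circ> \<gamma> e) \<and> {pathstart (c2 \<circ> \<gamma> e), pathfinish (c2 \<circ> \<gamma> e)} = (c2 \<circ> pos) ` e \<and>
         path_image (c2 \<circ> \<gamma> e) \<inter> (c2 \<circ> pos) ` V = (c2 \<circ> pos) ` e" by blast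
  next
    fix e e' assume e: "e \<in> E" "e' \<in> E" "e \<noteq> e'"
    have "path_image (c2 \<circ> \<gamma> e) \<inter> path_image (c2 \<circ> \<gamma> e') = c2 ` (path_image (\<gamma> e) \<inter> path_image (\<gamma> e'))"
      by (simp add: path_image_compose fI)
    also have "\<dots> \<subseteq> c2 ` (pos ` (e \<inter> e'))" using C e by (intro image_mono) blast
    also have "\<dots> = (c2 \<circ> pos) ` (e \<inter> e')" by (simp add: image_comp)
    finally show "path_image (c2 \<circ> \<gamma> e) \<inter> path_image (c2 \<circ> \<gamma> e') \<subseteq> (c2 \<circ> pos) ` (e \<inter> e')" .
  qed
  then show ?thesis by blast
qed

theorem lemma3p1:
  fixes V :: "'a set" and E :: "'a set set"
  assumes "planar V E"
    and "matching_covered V E"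
    and "cycle_extendable V E"
  shows "K23_free E"
  unfolding K23_free_def has_K23_bisubdivision_def
proof (intro notI, elim exE conjE)
  fix a b :: "nat \<Rightarrow> 'a" and P :: "nat \<Rightarrow> nat \<Rightarrow> 'a list"
  assume H1: "inj_on a {0..<2}" and H2: "inj_on b {0..<3}" and H3: "a ` {0..<2} \<inter> b ` {0..<3} = {}"
    and H4: "\<forall>i<2. \<forall>j<3. is_path E (a i) (P i j) (b j) \<and> odd (length (P i j) - 1) \<and>
                     inner_verts (P i j) \<inter> (a ` {0..<2} \<union> b ` {0..<3}) = {}"
    and H5: "\<forall>i<2. \<forall>j<3. \<forall>i'<2. \<forall>j'<3. (i, j) \<noteq> (i', j') \<longrightarrow>
                     inner_verts (P i j) \<inter> inner_verts (P i' j') = {}"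
  have g: "graph V E" using assms(2) unfolding matching_covered_def by simp
  obtain pos \<gamma> where cp: "cplane V E pos \<gamma>" using planar_complex[OF g assms(1)] by blast
  have ce: "\<forall>vs. is_cycle E vs \<and> even (length vs) \<longrightarrow>
        has_perfect_matching (V - set vs) (del_verts_E E (set vs))"
    using assms(3) unfolding cycle_extendable_def by simp
  have ax: "k23_axioms V E a b P"
  proof (unfold_locales)
    show "inj_on a {0..<2}" by (rule H1)
    show "inj_on b {0..<3}" by (rule H2)
    show "a ` {0..<2} \<inter> b ` {0..<3} = {}" by (rule H3)
    fix i j :: nat assume "i < 2" "j < 3"
    then show "is_path E (a i) (P i j) (b j) \<and> odd (length (P i j) - 1) \<and>
                     inner_verts (P i j) \<inter> (a ` {0..<2} \<union> b ` {0..<3}) = {}"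
      using H4 by simp
  next
    fix i j i' j' :: nat assume "i < 2" "j < 3" "i' < 2" "j' < 3" "(i, j) \<noteq> (i', j')"
    then show "inner_verts (P i j) \<inter> inner_verts (P i' j') = {}" using H5 by simp
  next
    fix vs assume "is_cycle E vs" "even (length vs)"
    then show "has_perfect_matching (V - set vs) (del_verts_E E (set vs))" using ce by simp
  qed
  have "k23 V E pos \<gamma> a b P" using cp ax by (rule k23.intro)
  then show False by (rule k23.k23_False)
qed

end
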